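(* Let $n\ge2$ and let $\mathcal G_n$, $\mathcal N_{0,n}$, $z_g$, $U_m(z_g)$ be as in the context. Let $D=\Theta((\gamma,g,\mu),C(\mu\eta))$ be a compact open bisection in $\mathcal G_n$ ($\gamma,\mu,\eta\in X^*$, $g\in\mathfrak G_n$). If $[(\varnothing,e,\varnothing),\mathbf 1^\infty]\in\overline D$, then there exist $m_D\in\mathbb N$ and $g_D\in\mathcal N_{0,n}$ such that $$D\cap\Bigl(\bigcup_{h\in\mathcal N_{0,n}}U_{m_D}(z_h)\Bigr)=U_{m_D}(z_{g_D}).$$
   Context: Let $X=\{\mathbf 0,\mathbf 1\}$, $X^*$ the finite words (with empty word $\varnothing$), $X^\omega$ the infinite words, $C(\eta)=\{\eta w:w\in X^\omega\}$, $\mathbf 1^m$ and $\mathbf 1^\infty$ the finite/infinite words of ones. Fix $n\ge2$, a primitive polynomial $f_n$ of degree $n$ over $\mathbb F_2$ with root $\alpha$, and $\operatorname{Tr}(\beta)=\beta+\beta^2+\dots+\beta^{2^{n-1}}\in\mathbb F_2$. $\mathfrak G_n$ is the group of automorphisms of the binary rooted tree $X^*$ generated by $a$ ($a\cdot(\mathbf 0w)=\mathbf 1w$, $a\cdot(\mathbf 1w)=\mathbf 0w$) and $\iota_n(\beta)$, $\beta\in\mathbb F_{2^n}$, where $\iota_n(\beta)\cdot(\mathbf 0w)=\mathbf 0(a^{\operatorname{Tr}(\beta)}\cdot w)$, $\iota_n(\beta)\cdot(\mathbf 1w)=\mathbf 1(\iota_n(\alpha\beta)\cdot w)$; restrictions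 $g|_x$ are given by $g\cdot(xw)=(g\cdot x)(g|_x\cdot w)$. $\mathcal N_{0,n}=\iota_n(\mathbb F_{2^n})$ and $e=\iota_n(0)$ is the identity. $\mathcal G_n$ is the groupoid of germs of the action of the inverse semigroup $\{(\eta,g,\mu)\}\cup\{0\}$ on $X^\omega$ with $(\eta,g,\mu):C(\mu)\to C(\eta)$, $\mu w\mapsto\eta(g\cdot w)$; germs $[(\eta,g,\mu),w]$, $w\in C(\mu)$, with $[(\eta,g,\mu),w]=[(\eta',g',\mu'),w']$ iff $w=w'$ and some finite prefix $\nu=\mu\epsilon=\mu'\epsilon'$ of $w$ satisfies $\eta(g\cdot\epsilon)=\eta'(g'\cdot\epsilon')$ and $g|_\epsilon=g'|_{\epsilon'}$. $\Theta(s,U)=\{[s,w]:w\in U\}$ for $s=(\eta,g,\mu)$, $U\subseteq C(\mu)$ open; these form a basis of the topology. $z_g=[(\varnothing,g,\varnothing),\mathbf 1^\infty]$ and $U_m(z_g)=\Theta((\varnothing,g,\varnothing),C(\mathbf 1^m))$. *)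

theory Defs
  imports "HOL-Analysis.Analysis" "HOL-Library.Z2" "HOL-Computational_Algebra.Polynomial"
begin

text \<open>Letters: False = 0, True = 1. Finite words: bool list. Infinite words: nat => bool.\<close>

text \<open>A primitive polynomial of degree n over F_2: irreducible of degree n whose order
  (least k > 0 with f dividing x^k - 1) equals 2^n - 1.\<close>
definition primitive_poly :: "nat \<Rightarrow> bit poly \<Rightarrow> bool" where
  "primitive_poly n f \<longleftrightarrow> degree f = n \<and> irreducible f \<and>
     (\<forall>k>0. f dvd (monom 1 k - 1) \<longleftrightarrow> (2^n - 1) dvd k)"

text \<open>Absolute trace F_{2^n} -> F_2, as a boolean (True iff Tr(b) = 1).\<close>
definition tr :: "nat \<Rightarrow> 'k::field \<Rightarrow> bool" where
  "tr n b \<longleftrightarrow> (\<Sum>i<n. b ^ (2 ^ i)) = 1"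

fun act_a :: "bool list \<Rightarrow> bool list" where
  "act_a [] = []"
| "act_a (x # w) = (\<not> x) # w"

fun iota :: "nat \<Rightarrow> 'k::field \<Rightarrow> 'k \<Rightarrow> bool list \<Rightarrow> bool list" where
  "iota n \<alpha> b [] = []"
| "iota n \<alpha> b (False # w) = False # (if tr n b then act_a w else w)"
| "iota n \<alpha> b (True # w) = True # iota n \<alpha> (\<alpha> * b) w"

inductive_set grpG :: "nat \<Rightarrow> 'k::field \<Rightarrow> (bool list \<Rightarrow> bool list) set"
  for n :: nat and \<alpha> :: "'k::field" where
  gen_id: "id \<in> grpG n \<alpha>"
| gen_a: "act_a \<in> grpG n \<alpha>"
| gen_iota: "iota n \<alpha> b \<in> grpG n \<alpha>"
| gen_comp: "g \<in> grpG n \<alpha> \<Longrightarrow> h \<in> grpG n \<alpha> \<Longrightarrow> g \<circ> h \<in> grpG n \<alpha>"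
| gen_inv: "g \<in> grpG n \<alpha> \<Longrightarrow> inv g \<in> grpG n \<alpha>"

definition N0 :: "nat \<Rightarrow> 'k::field \<Rightarrow> (bool list \<Rightarrow> bool list) set" where
  "N0 n \<alpha> = range (iota n \<alpha>)"

text \<open>Restriction g|_x, defined by g(xw) = (g x)(g|_x w).\<close>
definition restr :: "(bool list \<Rightarrow> bool list) \<Rightarrow> bool list \<Rightarrow> (bool list \<Rightarrow> bool list)" where
  "restr g x = (\<lambda>w. drop (length x) (g (x @ w)))"

definition pref :: "nat \<Rightarrow> (nat \<Rightarrow> bool) \<Rightarrow> bool list" where
  "pref k w = map w [0..<k]"

definition act_inf :: "(bool list \<Rightarrow> bool list) \<Rightarrow> (nat \<Rightarrow> bool) \<Rightarrow> (nat \<Rightarrow> bool)" where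
  "act_inf g w = (\<lambda>i. g (pref (Suc i) w) ! i)"

definition cyl :: "bool list \<Rightarrow> (nat \<Rightarrow> bool) set" where
  "cyl \<mu> = {w. \<forall>i<length \<mu>. w i = \<mu> ! i}"

definition conc :: "bool list \<Rightarrow> (nat \<Rightarrow> bool) \<Rightarrow> (nat \<Rightarrow> bool)" where
  "conc \<eta> v = (\<lambda>i. if i < length \<eta> then \<eta> ! i else v (i - length \<eta>))"

definition dropw :: "nat \<Rightarrow> (nat \<Rightarrow> bool) \<Rightarrow> (nat \<Rightarrow> bool)" where
  "dropw k w = (\<lambda>i. w (i + k))"

definition ones :: "nat \<Rightarrow> bool" where "ones = (\<lambda>_. True)"

definition cantor_open :: "(nat \<Rightarrow> bool) set \<Rightarrow> bool" where
  "cantor_open U \<longleftrightarrow> (\<forall>w\<in>U. \<exists>k. cyl (pref k w) \<subseteq> U)"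

type_synonym triple = "bool list \<times> (bool list \<Rightarrow> bool list) \<times> bool list"
type_synonym rep = "triple \<times> (nat \<Rightarrow> bool)"

definition valid_triple :: "nat \<Rightarrow> 'k::field \<Rightarrow> triple \<Rightarrow> bool" where
  "valid_triple n \<alpha> s = (case s of (\<eta>, g, \<mu>) \<Rightarrow> g \<in> grpG n \<alpha>)"

definition valid_rep :: "nat \<Rightarrow> 'k::field \<Rightarrow> rep \<Rightarrow> bool" where
  "valid_rep n \<alpha> r = (case r of ((\<eta>, g, \<mu>), w) \<Rightarrow> g \<in> grpG n \<alpha> \<and> w \<in> cyl \<mu>)"

definition germ_rel :: "rep \<Rightarrow> rep \<Rightarrow> bool" where
  "germ_rel r r' = (case r of ((\<eta>, g, \<mu>), w) \<Rightarrow> case r' of ((\<eta>', g', \<mu>'), w') \<Rightarrow>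
     w = w' \<and> (\<exists>\<epsilon> \<epsilon>'. \<mu> @ \<epsilon> = \<mu>' @ \<epsilon>' \<and> w \<in> cyl (\<mu> @ \<epsilon>) \<and>
        \<eta> @ g \<epsilon> = \<eta>' @ g' \<epsilon>' \<and> restr g \<epsilon> = restr g' \<epsilon>'))"

text \<open>The germ [s, w] as an equivalence class of valid representatives.\<close>
definition germ :: "nat \<Rightarrow> 'k::field \<Rightarrow> rep \<Rightarrow> rep set" where
  "germ n \<alpha> r = {r'. valid_rep n \<alpha> r' \<and> germ_rel r r'}"

definition Theta :: "nat \<Rightarrow> 'k::field \<Rightarrow> triple \<Rightarrow> (nat \<Rightarrow> bool) set \<Rightarrow> rep set set" where
  "Theta n \<alpha> s U = (\<lambda>w. germ n \<alpha> (s, w)) ` U"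

definition germ_basis :: "nat \<Rightarrow> 'k::field \<Rightarrow> rep set set set" where
  "germ_basis n \<alpha> = {Theta n \<alpha> (\<eta>, g, \<mu>) U | \<eta> g \<mu> U.
      g \<in> grpG n \<alpha> \<and> cantor_open U \<and> U \<subseteq> cyl \<mu>}"

definition germ_top :: "nat \<Rightarrow> 'k::field \<Rightarrow> rep set topology" where
  "germ_top n \<alpha> = topology_generated_by (germ_basis n \<alpha>)"

definition germs :: "nat \<Rightarrow> 'k::field \<Rightarrow> rep set set" where
  "germs n \<alpha> = {germ n \<alpha> r | r. valid_rep n \<alpha> r}"

text \<open>Source and range of representatives (constant on germs).\<close>
definition src_rep :: "rep \<Rightarrow> (nat \<Rightarrow> bool)" where
  "src_rep r = snd r"

definition rng_rep :: "rep \<Rightarrow> (nat \<Rightarrow> bool)" where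
  "rng_rep r = (case r of ((\<eta>, g, \<mu>), w) \<Rightarrow> conc \<eta> (act_inf g (dropw (length \<mu>) w)))"

definition bisection :: "nat \<Rightarrow> 'k::field \<Rightarrow> rep set set \<Rightarrow> bool" where
  "bisection n \<alpha> D \<longleftrightarrow> D \<subseteq> germs n \<alpha> \<and> openin (germ_top n \<alpha>) D \<and>
     (\<forall>x\<in>D. \<forall>y\<in>D. (\<exists>r\<in>x. \<exists>r'\<in>y. src_rep r = src_rep r') \<longrightarrow> x = y) \<and>
     (\<forall>x\<in>D. \<forall>y\<in>D. (\<exists>r\<in>x. \<exists>r'\<in>y. rng_rep r = rng_rep r') \<longrightarrow> x = y)"

definition compact_open_bisection :: "nat \<Rightarrow> 'k::field \<Rightarrow> rep set set \<Rightarrow> bool" where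
  "compact_open_bisection n \<alpha> D \<longleftrightarrow> compactin (germ_top n \<alpha>) D \<and> bisection n \<alpha> D"

definition z :: "nat \<Rightarrow> 'k::field \<Rightarrow> (bool list \<Rightarrow> bool list) \<Rightarrow> rep set" where
  "z n \<alpha> g = germ n \<alpha> (([], g, []), ones)"

definition Um :: "nat \<Rightarrow> 'k::field \<Rightarrow> nat \<Rightarrow> (bool list \<Rightarrow> bool list) \<Rightarrow> rep set set" where
  "Um n \<alpha> m g = Theta n \<alpha> ([], g, []) (cyl (replicate m True))"

end

theory Submission
  imports Defs
begin


definition tp :: "(bool list \<Rightarrow> bool list) \<Rightarrow> bool" where
  "tp g \<longleftrightarrow> (\<forall>x. length (g x) = length x) \<and> (\<forall>x y. take (length x) (g (x @ y)) = g x)"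

lemma tp_len: "tp g \<Longrightarrow> length (g x) = length x" by (simp add: tp_def)

lemma tp_app: "tp g \<Longrightarrow> g (x @ y) = g x @ restr g x y"
  unfolding restr_def tp_def by (metis append_take_drop_id)

lemma restr_Nil[simp]: "restr g [] = g" by (simp add: restr_def)

lemma restr_append: "restr g (x @ y) = restr (restr g x) y"
  by (simp add: restr_def fun_eq_iff add.commute)

lemma restr_comp: "tp g \<Longrightarrow> tp h \<Longrightarrow> restr (g \<circ> h) x = restr g (h x) \<circ> restr h x"
  unfolding fun_eq_iff comp_def
proof
  fix w assume g: "tp g" and h: "tp h"
  have "g (h (x @ w)) = g (h x) @ restr g (h x) (restr h x w)"
    using tp_app[OF h] tp_app[OF g] by simp
  then show "restr (\<lambda>x. g (h x)) x w = restr g (h x) (restr h x w)"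
    using tp_len[OF g, of "h x"] tp_len[OF h, of x] by (simp add: restr_def)
qed

lemma tp_restr: "tp g \<Longrightarrow> tp (restr g x)"
  unfolding tp_def restr_def
proof (intro conjI allI)
  fix y z assume g: "(\<forall>x. length (g x) = length x) \<and> (\<forall>x y. take (length x) (g (x @ y)) = g x)"
  show "length (drop (length x) (g (x @ y))) = length y" using g by simp
  have "take (length (x@y)) (g ((x @ y) @ z)) = g (x@y)" using g by blast
  then have "take (length x + length y) (g (x @ y @ z)) = g (x@y)" by simp
  then show "take (length y) (drop (length x) (g (x @ y @ z))) = drop (length x) (g (x @ y))"
    by (metis drop_take add.commute add_diff_cancel_right')
qed

lemma tp_id: "tp id" by (simp add: tp_def)

lemma act_a_len: "length (act_a x) = length x" by (cases x) auto
lemma act_a_inv[simp]: "act_a (act_a x) = x" by (cases x) auto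
lemma tp_act_a: "tp act_a"
  unfolding tp_def by (auto simp: act_a_len) (case_tac x; case_tac y; simp)+

context fixes n :: nat and \<alpha> :: "'k::field" begin

lemma iota_len: "length (iota n \<alpha> b x) = length x"
  by (induction n \<alpha> b x rule: iota.induct) (auto simp: act_a_len)

lemma iota_inv[simp]: "iota n \<alpha> b (iota n \<alpha> b x) = x"
  by (induction n \<alpha> b x rule: iota.induct) auto

lemma iota_pre: "take (length x) (iota n \<alpha> b (x @ y)) = iota n \<alpha> b x"
proof (induction n \<alpha> b x rule: iota.induct)
  case (2 n \<alpha> b w) then show ?case by (cases w; cases y) auto
qed auto

lemma tp_iota: "tp (iota n \<alpha> b)"
  unfolding tp_def using iota_len iota_pre by blast

lemma grpG_tp: "g \<in> grpG n \<alpha> \<Longrightarrow> bij g \<and> tp g"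
proof (induction rule: grpG.induct)
  case gen_id then show ?case using tp_id bij_id unfolding id_def by simp
next
  case gen_a then show ?case using tp_act_a by (metis act_a_inv bij_betw_byWitness subset_UNIV surj_def)
next
  case (gen_iota b) then show ?case using tp_iota
    by (metis iota_inv bij_betw_byWitness subset_UNIV surj_def)
next
  case (gen_comp g h)
  then have g: "tp g" and h: "tp h" by auto
  have "take (length x) (g (h (x @ y))) = g (h x)" for x y
    using tp_app[OF h, of x y] tp_app[OF g, of "h x"] tp_len[OF g, of "h x"] tp_len[OF h, of x] by simp
  then have "tp (g \<circ> h)" using g h by (simp add: tp_def)
  then show ?case using gen_comp bij_comp by blast
next
  case (gen_inv g)
  then have b: "bij g" and t: "tp g" by auto
  have len: "length (inv g x) = length x" for x
    by (metis b bij_inv_eq_iff t tp_len)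
  have "take (length x) (inv g (x @ y)) = inv g x" for x y
  proof -
    define u where "u = inv g (x @ y)"
    have gu: "g u = x @ y" unfolding u_def by (meson b bij_inv_eq_iff)
    have lu: "length u = length x + length y" using len u_def by simp
    have "take (length (take (length x) u)) (g (take (length x) u @ drop (length x) u)) = g (take (length x) u)"
      using t unfolding tp_def by blast
    then have "g (take (length x) u) = x" using gu lu by simp
    then show ?thesis unfolding u_def[symmetric] by (metis b bij_inv_eq_iff)
  qed
  then show ?case using len b bij_imp_bij_inv tp_def by blast
qed

end


lemma pow_card_same:
  fixes x :: "'a :: {field,finite}"
  shows "x ^ CARD('a) = x"
proof (cases "x = 0")
  case False
  have "x * (\<Prod>y\<in>UNIV-{0}. x * y) = x * x ^ (card (UNIV :: 'a set) - 1) * \<Prod>(UNIV-{0})"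
    by (simp add: prod.distrib mult_ac)
  also have "x * x ^ (card (UNIV :: 'a set) - 1) = x ^ Suc (card (UNIV :: 'a set) - 1)"
    by (subst power_Suc) auto
  also have "Suc (card (UNIV :: 'a set) - 1) = card (UNIV :: 'a set)"
    using finite_UNIV_card_ge_0[where ?'a = 'a] by simp
  also have "(\<Prod>y\<in>UNIV-{0}. x * y) = (\<Prod>y\<in>UNIV-{0}. y)"
    by (rule prod.reindex_bij_witness[of _ "\<lambda>y. y / x" "\<lambda>y. x * y"]) (use False in auto)
  finally show ?thesis
    by simp
qed (use finite_UNIV_card_ge_0[where ?'a = 'a] in auto)

context
  fixes n :: nat
  assumes card: "CARD('k::{field,finite}) = 2 ^ n" and n1: "n \<ge> 1"
begin

lemma two_zero: "(1::'k) + 1 = 0"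
proof -
  have "(-1::'k) ^ (2^n) = -1" using pow_card_same[of "-1::'k"] card by simp
  moreover have "even ((2::nat)^n)" using n1 by simp
  then have "(-1::'k) ^ (2^n) = 1" by simp
  ultimately have "(1::'k) = -1" by simp
  then show ?thesis by (metis add.right_inverse)
qed

lemma frob2: "((x::'k) + y)^2 = x^2 + y^2"
proof -
  have "((x::'k) + y)^2 = x^2 + y^2 + (1+1) * x * y" by (simp add: power2_eq_square algebra_simps)
  then show ?thesis using two_zero by simp
qed

lemma frob: "((x::'k) + y)^(2^i) = x^(2^i) + y^(2^i)"
proof (induction i)
  case (Suc i)
  have "(x+y)^(2^Suc i) = ((x+y)^(2^i))^2" by (simp add: power_mult[symmetric] mult.commute)
  also have "\<dots> = (x^(2^i))^2 + (y^(2^i))^2" using Suc frob2 by simp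
  finally show ?case by (simp add: power_mult[symmetric] mult.commute)
qed simp

lemma sum_sq: "(\<Sum>i\<in>A. (f i::'k))^2 = (\<Sum>i\<in>A. (f i)^2)"
proof (induction A rule: infinite_finite_induct)
  case (insert x F) then show ?case using frob2 by simp
qed auto

definition TT :: "'k \<Rightarrow> 'k" where "TT b = (\<Sum>i<n. b ^ (2^i))"

lemma TT_add: "TT (b + c) = TT b + TT c"
  unfolding TT_def by (simp add: frob sum.distrib)

lemma TT_sq: "(TT b)^2 = TT b"
proof -
  have "(TT b)^2 = (\<Sum>i<n. b ^ (2^Suc i))" unfolding TT_def sum_sq
    by (simp add: power_mult[symmetric] mult.commute)
  also have "\<dots> = (\<Sum>i<Suc n. b ^ (2^i)) - b"
    by (subst sum.lessThan_Suc_shift) simp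
  also have "\<dots> = TT b + b ^ (2^n) - b" unfolding TT_def by simp
  also have "b ^ (2^n) = b" using pow_card_same[of b] card by simp
  finally show ?thesis by simp
qed

lemma TT01: "TT b = 0 \<or> TT b = 1"
proof -
  have "TT b * (TT b - 1) = 0" using TT_sq[of b] by (simp add: power2_eq_square algebra_simps)
  then show ?thesis by auto
qed

lemma tr_add: "tr n ((b::'k) + c) \<longleftrightarrow> (tr n b \<noteq> tr n c)"
proof -
  have e: "tr n x \<longleftrightarrow> TT x = 1" for x :: 'k by (simp add: tr_def TT_def)
  show ?thesis unfolding e TT_add using TT01[of b] TT01[of c] two_zero by auto
qed

lemma iota_add: "iota n (\<alpha>::'k) b (iota n \<alpha> c x) = iota n \<alpha> (b + c) x"
proof (induction x arbitrary: b c)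
  case (Cons h w)
  show ?case
  proof (cases h)
    case True then show ?thesis using Cons by (simp add: distrib_left)
  next
    case False then show ?thesis using tr_add[of b c] by auto
  qed
qed simp

end


lemma iota_zero_app: "iota n (\<alpha>::'k::field) 0 x = x"
proof -
  have z: "(0::'k::field) ^ (2 ^ i) = 0" for i :: nat by simp
  have "\<not> tr n (0::'k::field)" unfolding tr_def z by simp
  then show ?thesis
  proof (induction x)
    case (Cons h w) then show ?case by (cases h) simp_all
  qed simp
qed

lemma iota_zero: "iota n \<alpha> 0 = id" using iota_zero_app by (auto simp: fun_eq_iff)

lemma tp_comp: "tp g \<Longrightarrow> tp h \<Longrightarrow> tp (g \<circ> h)"
proof -
  assume g: "tp g" and h: "tp h"
  have "take (length x) (g (h (x @ y))) = g (h x)" for x y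
    using tp_app[OF h, of x y] tp_app[OF g, of "h x"] tp_len[OF g, of "h x"] tp_len[OF h, of x] by simp
  then show "tp (g \<circ> h)" using g h by (simp add: tp_def)
qed

lemma restr_id: "restr id x = id" by (simp add: restr_def fun_eq_iff)

lemma restr_act_a: "x \<noteq> [] \<Longrightarrow> restr act_a x = id"
  by (cases x) (auto simp: restr_def fun_eq_iff)

definition Aa :: "bool \<Rightarrow> bool list \<Rightarrow> bool list" where
  "Aa s = (if s then act_a else id)"

lemma tp_Aa: "tp (Aa s)" by (simp add: Aa_def tp_act_a tp_id)

lemma restr_Aa: "x \<noteq> [] \<Longrightarrow> restr (Aa s) x = id"
  by (simp add: Aa_def restr_act_a restr_id)

lemma Aa_inv[simp]: "Aa s (Aa s x) = x" by (simp add: Aa_def)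

lemma len1: "length x = 1 \<Longrightarrow> \<exists>c. x = [c]"
  by (cases x) auto

context
  fixes n :: nat and \<alpha> :: "'k::{field,finite}"
  assumes card: "CARD('k) = 2 ^ n" and n1: "n \<ge> 1"
begin

definition MM :: "(bool list \<Rightarrow> bool list) set" where
  "MM = {Aa s \<circ> iota n \<alpha> b \<circ> Aa t | s t b. True}"

definition S1 :: "(bool list \<Rightarrow> bool list) set" where
  "S1 = insert act_a (range (iota n \<alpha>))"

lemma S1_cases: "p \<in> S1 \<Longrightarrow> p = act_a \<or> (\<exists>b. p = iota n \<alpha> b)"
  unfolding S1_def by auto

lemma id_S1: "id \<in> S1" unfolding S1_def using iota_zero by (metis rangeI insertI2)

lemma restr_iota1: "restr (iota n \<alpha> b) [c] \<in> S1"
proof (cases c)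
  case True
  then have "restr (iota n \<alpha> b) [c] = iota n \<alpha> (\<alpha> * b)" by (simp add: restr_def fun_eq_iff)
  then show ?thesis by (simp add: S1_def)
next
  case False
  then have "restr (iota n \<alpha> b) [c] = (if tr n b then act_a else id)" by (simp add: restr_def fun_eq_iff)
  then show ?thesis using id_S1 by (simp add: S1_def)
qed

lemma MM_tp: "p \<in> MM \<Longrightarrow> tp p"
  unfolding MM_def using tp_Aa tp_iota tp_comp by blast

lemma MM_restr1: "p \<in> MM \<Longrightarrow> restr p [c] \<in> S1"
proof -
  assume "p \<in> MM"
  then obtain s t b where p: "p = Aa s \<circ> (iota n \<alpha> b \<circ> Aa t)" unfolding MM_def by (auto simp: comp_assoc)
  have t1: "tp (iota n \<alpha> b \<circ> Aa t)" using tp_Aa tp_iota tp_comp by blast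
  have "length (Aa t [c]) = 1" using tp_len[OF tp_Aa] by simp
  then obtain c' where c': "Aa t [c] = [c']" using len1 by blast
  have "restr p [c] = restr (Aa s) ((iota n \<alpha> b \<circ> Aa t) [c]) \<circ> (restr (iota n \<alpha> b) [c'] \<circ> restr (Aa t) [c])"
  proof -
    have "restr p [c] = restr (Aa s) ((iota n \<alpha> b \<circ> Aa t) [c]) \<circ> restr (iota n \<alpha> b \<circ> Aa t) [c]"
      unfolding p by (rule restr_comp[OF tp_Aa t1])
    moreover have "restr (iota n \<alpha> b \<circ> Aa t) [c] = restr (iota n \<alpha> b) [c'] \<circ> restr (Aa t) [c]"
      using restr_comp[OF tp_iota tp_Aa, of n \<alpha> b t "[c]"] c' by simp
    ultimately show ?thesis by simp
  qed
  also have "\<dots> = restr (iota n \<alpha> b) [c']"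
  proof -
    have "length ((iota n \<alpha> b \<circ> Aa t) [c]) = 1" using tp_len[OF t1, of "[c]"] by simp
    then have ne: "(iota n \<alpha> b \<circ> Aa t) [c] \<noteq> []" by auto
    show ?thesis using restr_Aa[OF ne] restr_Aa[of "[c]"] by simp
  qed
  finally show ?thesis using restr_iota1 by simp
qed

lemma S1_MM: "p \<in> S1 \<Longrightarrow> p \<in> MM"
proof -
  assume "p \<in> S1"
  then consider "p = act_a" | b where "p = iota n \<alpha> b" unfolding S1_def by auto
  then show ?thesis
  proof cases
    case 1
    then have "p = Aa True \<circ> iota n \<alpha> 0 \<circ> Aa False" by (simp add: Aa_def iota_zero)
    then show ?thesis unfolding MM_def by blast
  next
    case (2 b)
    then have "p = Aa False \<circ> iota n \<alpha> b \<circ> Aa False" by (simp add: Aa_def)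
    then show ?thesis unfolding MM_def by blast
  qed
qed

lemma S1S1: "p \<in> S1 \<Longrightarrow> q \<in> S1 \<Longrightarrow> p \<circ> q \<in> MM"
proof -
  assume "p \<in> S1" "q \<in> S1"
  then consider "p = act_a" "q = act_a" | b where "p = act_a" "q = iota n \<alpha> b"
    | b where "p = iota n \<alpha> b" "q = act_a" | b c where "p = iota n \<alpha> b" "q = iota n \<alpha> c"
    unfolding S1_def by auto
  then show ?thesis
  proof cases
    case 1
    then have "p \<circ> q = Aa False \<circ> iota n \<alpha> 0 \<circ> Aa False" by (simp add: Aa_def iota_zero fun_eq_iff)
    then show ?thesis unfolding MM_def by blast
  next
    case (2 b)
    then have "p \<circ> q = Aa True \<circ> iota n \<alpha> b \<circ> Aa False" by (simp add: Aa_def)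
    then show ?thesis unfolding MM_def by blast
  next
    case (3 b)
    then have "p \<circ> q = Aa False \<circ> iota n \<alpha> b \<circ> Aa True" by (simp add: Aa_def)
    then show ?thesis unfolding MM_def by blast
  next
    case (4 b c)
    then have "p \<circ> q = Aa False \<circ> iota n \<alpha> (b + c) \<circ> Aa False"
      using iota_add[OF card n1] by (simp add: Aa_def fun_eq_iff)
    then show ?thesis unfolding MM_def by blast
  qed
qed

lemma MM_restr: "p \<in> MM \<Longrightarrow> restr p x \<in> MM"
proof (induction x rule: rev_induct)
  case (snoc c x)
  then show ?case using MM_restr1 S1_MM by (simp add: restr_append)
qed simp

lemma MM_inv: "p \<in> MM \<Longrightarrow> \<exists>p'\<in>MM. p' \<circ> p = id \<and> p \<circ> p' = id"
proof -
  assume "p \<in> MM"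
  then obtain s t b where p: "p = Aa s \<circ> iota n \<alpha> b \<circ> Aa t" unfolding MM_def by auto
  have "Aa t \<circ> iota n \<alpha> b \<circ> Aa s \<in> MM" unfolding MM_def by blast
  moreover have "(Aa t \<circ> iota n \<alpha> b \<circ> Aa s) \<circ> p = id" "p \<circ> (Aa t \<circ> iota n \<alpha> b \<circ> Aa s) = id"
    unfolding p by (auto simp: fun_eq_iff)
  ultimately show ?thesis by blast
qed

lemma nucleus: "g \<in> grpG n \<alpha> \<Longrightarrow> \<exists>K. \<forall>x. K \<le> length x \<longrightarrow> restr g x \<in> MM"
proof (induction rule: grpG.induct)
  case gen_id
  have "id \<in> MM" using id_S1 S1_MM by blast
  then have "\<forall>x. 0 \<le> length x \<longrightarrow> restr id x \<in> MM" using restr_id by simp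
  then show ?case by blast
next
  case gen_a
  have "id \<in> MM" using id_S1 S1_MM by blast
  have "restr act_a x \<in> MM" if "1 \<le> length x" for x
  proof -
    have "x \<noteq> []" using that by auto
    then show ?thesis using restr_act_a \<open>id \<in> MM\<close> by simp
  qed
  then show ?case by blast
next
  case (gen_iota b)
  have "iota n \<alpha> b \<in> MM" using S1_MM by (simp add: S1_def)
  then show ?case using MM_restr by blast
next
  case (gen_comp g h)
  obtain Kg where Kg: "\<forall>x. Kg \<le> length x \<longrightarrow> restr g x \<in> MM" using gen_comp by blast
  obtain Kh where Kh: "\<forall>x. Kh \<le> length x \<longrightarrow> restr h x \<in> MM" using gen_comp by blast
  have tg: "tp g" and th: "tp h" using grpG_tp gen_comp by blast+
  have "restr (g \<circ> h) x \<in> MM" if "max Kg Kh + 1 \<le> length x" for x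
  proof -
    have "x \<noteq> []" using that by auto
    then obtain x1 c where x: "x = x1 @ [c]" by (metis rev_exhaust)
    have l: "max Kg Kh \<le> length x1" using that x by simp
    define P where "P = restr g (h x1)"
    define Q where "Q = restr h x1"
    have PM: "P \<in> MM" using Kg l tp_len[OF th, of x1] P_def by simp
    have QM: "Q \<in> MM" using Kh l Q_def by simp
    have "restr (g \<circ> h) x = restr (P \<circ> Q) [c]"
      unfolding x restr_append restr_comp[OF tg th] P_def Q_def ..
    also have "\<dots> = restr P (Q [c]) \<circ> restr Q [c]" using restr_comp MM_tp PM QM by blast
    finally have e: "restr (g \<circ> h) x = restr P (Q [c]) \<circ> restr Q [c]" .
    have "length (Q [c]) = 1" using tp_len[OF MM_tp[OF QM]] by simp
    then obtain c' where "Q [c] = [c']" using len1 by blast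
    then show ?thesis using e S1S1 MM_restr1 PM QM by simp
  qed
  then show ?case by blast
next
  case (gen_inv g)
  obtain K where K: "\<forall>x. K \<le> length x \<longrightarrow> restr g x \<in> MM" using gen_inv by blast
  have b: "bij g" and tg: "tp g" using grpG_tp gen_inv by blast+
  have ti: "tp (inv g)" using grpG_tp gen_inv grpG.gen_inv by blast
  have "restr (inv g) x \<in> MM" if "K \<le> length x" for x
  proof -
    define y where "y = inv g x"
    have ly: "length y = length x" using tp_len[OF ti] y_def by simp
    have gy: "g y = x" using b y_def by (meson bij_inv_eq_iff)
    define p where "p = restr g y"
    define q where "q = restr (inv g) x"
    have pM: "p \<in> MM" using K ly that p_def by simp
    have "q \<circ> p = restr (inv g \<circ> g) y" using restr_comp[OF ti tg, of y] gy p_def q_def by simp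
    also have "inv g \<circ> g = id" using b bij_is_inj inv_o_cancel by blast
    finally have "q \<circ> p = restr id y" .
    then have qp: "q \<circ> p = id" by (simp only: restr_id)
    have "p \<circ> q = restr (g \<circ> inv g) x" using restr_comp[OF tg ti, of x] p_def q_def y_def by simp
    also have "g \<circ> inv g = id" using b bij_is_surj surj_iff by blast
    finally have "p \<circ> q = restr id x" .
    then have pq: "p \<circ> q = id" by (simp only: restr_id)
    obtain p' where p': "p' \<in> MM" "p' \<circ> p = id" "p \<circ> p' = id" using MM_inv pM by blast
    have "q = q \<circ> (p \<circ> p')" using p' by simp
    also have "\<dots> = p'" using qp by (simp add: comp_assoc[symmetric])
    finally show ?thesis using p' q_def by simp
  qed
  then show ?case by blast
qed

end


lemma cyl_nth: "w \<in> cyl \<nu> \<Longrightarrow> i < length \<nu> \<Longrightarrow> w i = \<nu> ! i"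
  by (simp add: cyl_def)

lemma length_pref[simp]: "length (pref k w) = k" by (simp add: pref_def)

lemma cyl_pref: "w \<in> cyl \<nu> \<longleftrightarrow> \<nu> = pref (length \<nu>) w"
proof
  assume "w \<in> cyl \<nu>" then show "\<nu> = pref (length \<nu>) w" unfolding cyl_def pref_def by (auto intro!: nth_equalityI)
next
  assume h: "\<nu> = pref (length \<nu>) w"
  show "w \<in> cyl \<nu>" unfolding cyl_def mem_Collect_eq
  proof (intro allI impI)
    fix i assume i: "i < length \<nu>"
    then have e: "pref (length \<nu>) w ! i = w i" by (simp add: pref_def)
    have "\<nu> ! i = pref (length \<nu>) w ! i" by (rule arg_cong[of _ _ "\<lambda>l. l ! i"], rule h)
    then show "w i = \<nu> ! i" using e by simp
  qed
qed

lemma pref_mono: "k \<le> k' \<Longrightarrow> pref k' w = pref k w @ map w [k..<k']"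
  unfolding pref_def by (metis le_Suc_ex map_append upt_add_eq_append zero_le)

lemma cyl_app: "cyl (x @ y) \<subseteq> cyl x"
  unfolding cyl_def by (auto simp: nth_append)

lemma cantor_open_cyl: "cantor_open (cyl \<nu>)"
  unfolding cantor_open_def
proof
  fix w assume "w \<in> cyl \<nu>"
  then have "cyl (pref (length \<nu>) w) = cyl \<nu>" using cyl_pref by metis
  then show "\<exists>k. cyl (pref k w) \<subseteq> cyl \<nu>" by blast
qed

lemma germ_ext:
  assumes "tp g1" "tp g2" "\<eta>1 @ g1 e1 = \<eta>2 @ g2 e2" "restr g1 e1 = restr g2 e2"
  shows "\<eta>1 @ g1 (e1 @ zs) = \<eta>2 @ g2 (e2 @ zs) \<and> restr g1 (e1 @ zs) = restr g2 (e2 @ zs)"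
  using assms tp_app[OF assms(1), of e1 zs] tp_app[OF assms(2), of e2 zs]
  by (simp add: restr_append)

lemma germ_rel_refl: "w \<in> cyl \<mu> \<Longrightarrow> germ_rel ((\<eta>, g, \<mu>), w) ((\<eta>, g, \<mu>), w)"
  unfolding germ_rel_def by (auto intro!: exI[of _ "[]"])

lemma germ_rel_sym:
  assumes "germ_rel ((\<eta>, g, \<mu>), w) ((\<eta>', g', \<mu>'), w')"
  shows "germ_rel ((\<eta>', g', \<mu>'), w') ((\<eta>, g, \<mu>), w)"
proof -
  from assms obtain e e' where "w = w'" "\<mu> @ e = \<mu>' @ e'" "w \<in> cyl (\<mu> @ e)"
    "\<eta> @ g e = \<eta>' @ g' e'" "restr g e = restr g' e'"
    unfolding germ_rel_def by auto
  then show ?thesis unfolding germ_rel_def prod.case by (intro conjI exI[of _ e'] exI[of _ e]; simp)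
qed

lemma germ_rel_trans:
  assumes t1: "tp g1" and t2: "tp g2" and t3: "tp g3"
    and r12: "germ_rel ((\<eta>1, g1, \<mu>1), w1) ((\<eta>2, g2, \<mu>2), w2)"
    and r23: "germ_rel ((\<eta>2, g2, \<mu>2), w2) ((\<eta>3, g3, \<mu>3), w3)"
  shows "germ_rel ((\<eta>1, g1, \<mu>1), w1) ((\<eta>3, g3, \<mu>3), w3)"
proof -
  from r12 obtain e1 e2 where w12: "w1 = w2" and a1: "\<mu>1 @ e1 = \<mu>2 @ e2" and a2: "w1 \<in> cyl (\<mu>1 @ e1)"
    and a3: "\<eta>1 @ g1 e1 = \<eta>2 @ g2 e2" and a4: "restr g1 e1 = restr g2 e2"
    unfolding germ_rel_def by auto
  from r23 obtain d2 d3 where w23: "w2 = w3" and b1: "\<mu>2 @ d2 = \<mu>3 @ d3" and b2: "w2 \<in> cyl (\<mu>2 @ d2)"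
    and b3: "\<eta>2 @ g2 d2 = \<eta>3 @ g3 d3" and b4: "restr g2 d2 = restr g3 d3"
    unfolding germ_rel_def by auto
  define w where "w = w1"
  have p1: "\<mu>2 @ e2 = pref (length (\<mu>2 @ e2)) w" using a2 a1 cyl_pref w_def by metis
  have p2: "\<mu>2 @ d2 = pref (length (\<mu>2 @ d2)) w" using b2 w12 cyl_pref w_def by metis
  show ?thesis
  proof (cases "length e2 \<le> length d2")
    case True
    define zs where "zs = map w [length (\<mu>2 @ e2)..<length (\<mu>2 @ d2)]"
    have "\<mu>2 @ d2 = (\<mu>2 @ e2) @ zs" using p1 p2 pref_mono[of "length (\<mu>2 @ e2)" "length (\<mu>2 @ d2)" w] True
      unfolding zs_def by simp
    then have d2: "d2 = e2 @ zs" by simp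
    have E: "\<eta>1 @ g1 (e1 @ zs) = \<eta>2 @ g2 (e2 @ zs) \<and> restr g1 (e1 @ zs) = restr g2 (e2 @ zs)"
      using germ_ext[OF t1 t2 a3 a4] by blast
    have "\<mu>1 @ (e1 @ zs) = \<mu>3 @ d3" using a1 b1 d2 by (metis append.assoc)
    moreover have "w1 \<in> cyl (\<mu>1 @ (e1 @ zs))" using b2 w12 a1 d2 by (metis append.assoc)
    ultimately show ?thesis unfolding germ_rel_def prod.case using E b3 b4 d2 w12 w23
      by (intro conjI exI[of _ "e1 @ zs"] exI[of _ d3]) auto
  next
    case False
    define zs where "zs = map w [length (\<mu>2 @ d2)..<length (\<mu>2 @ e2)]"
    have "\<mu>2 @ e2 = (\<mu>2 @ d2) @ zs" using p1 p2 pref_mono[of "length (\<mu>2 @ d2)" "length (\<mu>2 @ e2)" w] False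
      unfolding zs_def by simp
    then have e2: "e2 = d2 @ zs" by simp
    have E: "\<eta>2 @ g2 (d2 @ zs) = \<eta>3 @ g3 (d3 @ zs) \<and> restr g2 (d2 @ zs) = restr g3 (d3 @ zs)"
      using germ_ext[OF t2 t3 b3 b4] by blast
    have "\<mu>1 @ e1 = \<mu>3 @ (d3 @ zs)" using a1 b1 e2 by (metis append.assoc)
    then show ?thesis unfolding germ_rel_def prod.case using E a2 a3 a4 e2 w12 w23
      by (intro conjI exI[of _ e1] exI[of _ "d3 @ zs"]) auto
  qed
qed

lemma valid_tp: "valid_rep n \<alpha> ((\<eta>, g, \<mu>), w) \<Longrightarrow> tp g"
  unfolding valid_rep_def using grpG_tp by auto

lemma germ_self: "g \<in> grpG n \<alpha> \<Longrightarrow> w \<in> cyl \<mu> \<Longrightarrow> ((\<eta>, g, \<mu>), w) \<in> germ n \<alpha> ((\<eta>, g, \<mu>), w)"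
  unfolding germ_def valid_rep_def using germ_rel_refl by auto

lemma germ_eq:
  assumes g1: "g1 \<in> grpG n \<alpha>" and g2: "g2 \<in> grpG n \<alpha>"
    and r: "germ_rel ((\<eta>1, g1, \<mu>1), w1) ((\<eta>2, g2, \<mu>2), w2)"
  shows "germ n \<alpha> ((\<eta>1, g1, \<mu>1), w1) = germ n \<alpha> ((\<eta>2, g2, \<mu>2), w2)"
proof -
  have t1: "tp g1" and t2: "tp g2" using g1 g2 grpG_tp by blast+
  have "germ_rel ((\<eta>1, g1, \<mu>1), w1) r3 \<longleftrightarrow> germ_rel ((\<eta>2, g2, \<mu>2), w2) r3"
    if v: "valid_rep n \<alpha> r3" for r3
  proof -
    obtain \<eta>3 g3 \<mu>3 w3 where r3: "r3 = ((\<eta>3, g3, \<mu>3), w3)" by (metis prod.exhaust)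
    have t3: "tp g3" using v r3 valid_tp by blast
    show ?thesis unfolding r3
      using germ_rel_trans[OF t1 t2 t3 r] germ_rel_trans[OF t2 t1 t3 germ_rel_sym[OF r]] by blast
  qed
  then show ?thesis unfolding germ_def by blast
qed

lemma iota_ones: "iota n \<alpha> c (replicate m True @ w) = replicate m True @ iota n \<alpha> (\<alpha> ^ m * c) w"
  by (induction m arbitrary: c) (auto simp: mult.assoc mult.left_commute)

lemma restr_iota_ones: "restr (iota n \<alpha> c) (replicate m True) = iota n \<alpha> (\<alpha> ^ m * c)"
  unfolding restr_def fun_eq_iff using iota_ones[of n \<alpha> c m] by simp

lemma iota_ones0: "iota n \<alpha> c (replicate m True) = replicate m True"
  using iota_ones[of n \<alpha> c m "[]"] by simp

lemma alpha_nz: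
  fixes \<alpha> :: "'k::field"
  assumes n2: "n \<ge> 2" and pf: "primitive_poly n f" and r: "poly (map_poly of_bit f) \<alpha> = 0"
  shows "\<alpha> \<noteq> 0"
proof
  assume a0: "\<alpha> = 0"
  have "of_bit (coeff f 0) = (0::'k)" using r a0 by (simp add: poly_0_coeff_0 coeff_map_poly)
  then have c0: "coeff f 0 = 0" by (cases "coeff f 0") auto
  then have "[:0, 1:] dvd f" by (simp add: dvd_iff_poly_eq_0 poly_0_coeff_0)
  then obtain q where fq: "f = [:0, 1:] * q" by (elim dvdE)
  have irr: "irreducible f" and df: "degree f = n" using pf by (auto simp: primitive_poly_def)
  have f0: "f \<noteq> 0" using irr by auto
  then have q0: "q \<noteq> 0" using fq by auto
  have "\<not> is_unit [:0, 1::bit:]" by (subst is_unit_iff_degree) auto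
  then have "is_unit q" using irreducibleD[OF irr fq] by blast
  then have "degree q = 0" using is_unit_iff_degree q0 by blast
  then have "degree f = 1" using fq q0 by (simp add: degree_mult_eq)
  then show False using df n2 by simp
qed



lemma cyl_rep_mono: "k \<le> m \<Longrightarrow> cyl (replicate m x) \<subseteq> cyl (replicate k x)"
  using cyl_app[of "replicate k x" "replicate (m - k) x"] by (simp add: replicate_add[symmetric])

lemma act_a_ne_id: "act_a \<noteq> id"
proof
  assume "act_a = id"
  then have "act_a [False] = [False]" by simp
  then show False by simp
qed

theorem mainTheorem8:
  fixes n :: nat and f :: "bit poly" and \<alpha> :: "'k::{field,finite}"
    and \<gamma> \<mu> \<eta> :: "bool list" and g :: "bool list \<Rightarrow> bool list"
    and D :: "rep set set"
  assumes "n \<ge> 2"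
    and "CARD('k) = 2 ^ n"
    and "primitive_poly n f"
    and "poly (map_poly of_bit f) \<alpha> = 0"
    and "g \<in> grpG n \<alpha>"
    and "D = Theta n \<alpha> (\<gamma>, g, \<mu>) (cyl (\<mu> @ \<eta>))"
    and "compact_open_bisection n \<alpha> D"
    and "germ n \<alpha> (([], iota n \<alpha> 0, []), ones) \<in> germ_top n \<alpha> closure_of D"
  shows "\<exists>m::nat. \<exists>gD \<in> N0 n \<alpha>.
           D \<inter> (\<Union>h \<in> N0 n \<alpha>. Um n \<alpha> m h) = Um n \<alpha> m gD"
proof -
  define e0 where "e0 = iota n \<alpha> 0"
  have n1: "n \<ge> 1" using assms(1) by simp
  have e0id: "e0 = id" using iota_zero e0_def by metis
  have e0G: "e0 \<in> grpG n \<alpha>" unfolding e0_def by (rule grpG.gen_iota)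
  have gG: "g \<in> grpG n \<alpha>" by fact
  have tg: "tp g" using grpG_tp gG by blast
  have anz: "\<alpha> \<noteq> 0" using alpha_nz assms(1,3,4) by blast
  obtain K where K: "\<forall>x. K \<le> length x \<longrightarrow> restr g x \<in> MM n \<alpha>"
    using nucleus[OF assms(2) n1 gG] by blast
  define k where "k = length (\<mu> @ \<eta>)"
  define a where "a = length \<mu>"
  define j where "j = K + k + 1"
  define m where "m = a + j"
  have km: "k \<le> m" and am: "a \<le> k" unfolding k_def a_def m_def j_def by auto
  define T where "T = Theta n \<alpha> ([], e0, []) (cyl (replicate m True))"
  have Topen: "openin (germ_top n \<alpha>) T"
    unfolding germ_top_def openin_topology_generated_by_iff
  proof (rule generate_topology_on.Basis)
    have "cyl (replicate m True) \<subseteq> cyl []" by (simp add: cyl_def)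
    then show "T \<in> germ_basis n \<alpha>" unfolding germ_basis_def T_def
      using e0G cantor_open_cyl by blast
  qed
  have zT: "germ n \<alpha> (([], e0, []), ones) \<in> T"
    unfolding T_def Theta_def by (rule imageI) (simp add: cyl_def ones_def)
  obtain y where yD: "y \<in> D" and yT: "y \<in> T"
    using assms(8) Topen zT unfolding in_closure_of e0_def by blast
  obtain w1 where w1: "w1 \<in> cyl (\<mu> @ \<eta>)" "y = germ n \<alpha> ((\<gamma>, g, \<mu>), w1)"
    using yD unfolding assms(6) Theta_def by auto
  obtain w2 where w2: "w2 \<in> cyl (replicate m True)" "y = germ n \<alpha> (([], e0, []), w2)"
    using yT unfolding T_def Theta_def by auto
  have w1\<mu>: "w1 \<in> cyl \<mu>" using w1 cyl_app by blast
  have "((\<gamma>, g, \<mu>), w1) \<in> y" using germ_self[OF gG w1\<mu>] w1 by simp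
  then have gr: "germ_rel (([], e0, []), w2) ((\<gamma>, g, \<mu>), w1)" using w2 unfolding germ_def by auto
  then obtain \<epsilon> \<epsilon>' where w21: "w2 = w1" and \<epsilon>def: "\<epsilon> = \<mu> @ \<epsilon>'" and w\<epsilon>: "w1 \<in> cyl \<epsilon>"
    and \<epsilon>g: "e0 \<epsilon> = \<gamma> @ g \<epsilon>'" and rr: "restr e0 \<epsilon> = restr g \<epsilon>'"
    unfolding germ_rel_def by auto
  have \<epsilon>g': "\<epsilon> = \<gamma> @ g \<epsilon>'" using \<epsilon>g e0id by simp
  have rid: "restr g \<epsilon>' = id" using rr e0id restr_id by metis
  define w where "w = w1"
  have wm: "w i = True" if "i < m" for i
    using cyl_nth[OF w2(1)] that w21 w_def by simp
  have \<mu>\<eta>1: "\<mu> @ \<eta> = replicate k True"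
  proof (rule nth_equalityI)
    show "length (\<mu> @ \<eta>) = length (replicate k True)" using k_def by simp
    fix i assume "i < length (\<mu> @ \<eta>)"
    then show "(\<mu> @ \<eta>) ! i = replicate k True ! i"
      using cyl_nth[OF w1(1)] wm[of i] km k_def w_def by simp
  qed
  have \<mu>1: "\<mu> = replicate a True"
  proof -
    have "\<mu> = take a (\<mu> @ \<eta>)" using a_def by simp
    also have "\<dots> = replicate a True" using \<mu>\<eta>1 am by simp
    finally show ?thesis .
  qed
  have l\<gamma>: "length \<gamma> = a"
    using arg_cong[OF \<epsilon>g', of length] \<epsilon>def tp_len[OF tg, of \<epsilon>'] a_def by simp
  have key: "\<exists>b. restr g (replicate j True) = iota n \<alpha> b \<and> \<gamma> @ g (replicate j True) = replicate m True"
  proof (cases "j \<le> length \<epsilon>'")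
    case True
    define \<delta> where "\<delta> = drop j \<epsilon>'"
    have tk: "take j \<epsilon>' = replicate j True"
    proof (rule nth_equalityI)
      show "length (take j \<epsilon>') = length (replicate j True)" using True by simp
      fix i assume i: "i < length (take j \<epsilon>')"
      then have "take j \<epsilon>' ! i = \<epsilon> ! (a + i)" using \<epsilon>def a_def by (simp add: nth_append)
      also have "\<dots> = w (a + i)" using cyl_nth[OF w\<epsilon>, of "a + i"] i \<epsilon>def a_def w_def by simp
      also have "\<dots> = True" using wm i m_def by simp
      finally show "take j \<epsilon>' ! i = replicate j True ! i" using i by simp
    qed
    have \<epsilon>'s: "\<epsilon>' = replicate j True @ \<delta>" using tk \<delta>_def by (metis append_take_drop_id)
    define P where "P = restr g (replicate j True)"
    have g\<epsilon>': "g \<epsilon>' = g (replicate j True) @ P \<delta>" using tp_app[OF tg] \<epsilon>'s P_def by simp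
    have rP: "restr P \<delta> = id" using rid \<epsilon>'s P_def restr_append by metis
    have "(\<gamma> @ g (replicate j True)) @ P \<delta> = replicate m True @ \<delta>"
      using \<epsilon>g' g\<epsilon>' \<epsilon>def \<epsilon>'s \<mu>1 m_def by (simp add: replicate_add)
    moreover have "length (\<gamma> @ g (replicate j True)) = length (replicate m True)"
      using l\<gamma> tp_len[OF tg] m_def by simp
    ultimately have G: "\<gamma> @ g (replicate j True) = replicate m True" and P\<delta>: "P \<delta> = \<delta>"
      using append_eq_append_conv by blast+
    have j1: "replicate j True = replicate (j - 1) True @ [True]"
      using j_def by (metis add_diff_cancel_right' replicate_Suc replicate_append_same Suc_eq_plus1)
    have "restr g (replicate (j - 1) True) \<in> MM n \<alpha>" using K j_def by simp
    then have PS: "P \<in> S1 n \<alpha>" using MM_restr1[OF assms(2) n1] P_def j1 restr_append by metis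
    have "P \<noteq> act_a"
    proof
      assume Pa: "P = act_a"
      show False
      proof (cases \<delta>)
        case Nil then show False using rP Pa act_a_ne_id by simp
      next
        case (Cons c r) then show False using P\<delta> Pa by simp
      qed
    qed
    then obtain b where "P = iota n \<alpha> b" using S1_cases[OF assms(2) n1 PS] by blast
    then show ?thesis using G P_def by auto
  next
    case False
    define i where "i = length \<epsilon>'"
    have l\<epsilon>: "length \<epsilon> = a + i" using \<epsilon>def a_def i_def by simp
    have \<epsilon>1: "\<epsilon> = replicate (a + i) True"
    proof (rule nth_equalityI)
      show "length \<epsilon> = length (replicate (a + i) True)" using l\<epsilon> by simp
      fix t assume t: "t < length \<epsilon>"
      then have "\<epsilon> ! t = w t" using cyl_nth[OF w\<epsilon>] w_def by simp
      also have "\<dots> = True" using wm t l\<epsilon> False i_def m_def by simp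
      finally show "\<epsilon> ! t = replicate (a + i) True ! t" using t l\<epsilon> by simp
    qed
    have \<epsilon>'1: "\<epsilon>' = replicate i True"
    proof -
      have "\<epsilon>' = drop a \<epsilon>" using \<epsilon>def a_def by simp
      then show ?thesis using \<epsilon>1 by simp
    qed
    have ji: "replicate j True = replicate i True @ replicate (j - i) True"
      using False i_def by (simp add: replicate_add[symmetric])
    have rid': "restr g (replicate i True) = id" using rid \<epsilon>'1 by simp
    have "g (replicate j True) = g (replicate i True) @ replicate (j - i) True"
      using tp_app[OF tg, of "replicate i True" "replicate (j - i) True"] rid' ji by simp
    then have "\<gamma> @ g (replicate j True) = (\<gamma> @ g (replicate i True)) @ replicate (j - i) True" by simp
    also have "\<gamma> @ g (replicate i True) = replicate (a + i) True" using \<epsilon>g' \<epsilon>1 \<epsilon>'1 by simp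
    also have "replicate (a + i) True @ replicate (j - i) True = replicate (a + i + (j - i)) True"
      by (simp add: replicate_add)
    also have "a + i + (j - i) = m" using False i_def m_def by simp
    finally have G: "\<gamma> @ g (replicate j True) = replicate m True" .
    have "restr g (replicate j True) = restr id (replicate (j - i) True)"
      using ji rid' restr_append by metis
    then have "restr g (replicate j True) = iota n \<alpha> 0" using restr_id iota_zero by metis
    then show ?thesis using G by blast
  qed
  then obtain b where Pb: "restr g (replicate j True) = iota n \<alpha> b"
    and Gj: "\<gamma> @ g (replicate j True) = replicate m True" by blast
  define c where "c = b / \<alpha> ^ m"
  define gD where "gD = iota n \<alpha> c"
  have rgD: "restr gD (replicate m True) = iota n \<alpha> b"
    unfolding gD_def restr_iota_ones c_def using anz by simp
  have gD1: "gD (replicate m True) = replicate m True" unfolding gD_def by (rule iota_ones0)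
  have gDG: "gD \<in> grpG n \<alpha>" unfolding gD_def by (rule grpG.gen_iota)
  have gDN: "gD \<in> N0 n \<alpha>" unfolding gD_def N0_def by simp
  have \<mu>j: "\<mu> @ replicate j True = replicate m True" using \<mu>1 m_def by (simp add: replicate_add)
  have keyeq: "germ n \<alpha> ((\<gamma>, g, \<mu>), v) = germ n \<alpha> (([], gD, []), v)" if v: "v \<in> cyl (replicate m True)" for v
  proof (rule germ_eq[OF gG gDG])
    show "germ_rel ((\<gamma>, g, \<mu>), v) (([], gD, []), v)"
      unfolding germ_rel_def prod.case
      by (intro conjI exI[of _ "replicate j True"] exI[of _ "replicate m True"])
         (use \<mu>j v Gj gD1 Pb rgD in simp_all)
  qed
  have sub: "cyl (replicate m True) \<subseteq> cyl (\<mu> @ \<eta>)" using \<mu>\<eta>1 cyl_rep_mono km by simp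
  show ?thesis
  proof (intro exI[of _ m] bexI[of _ gD] gDN set_eqI iffI)
    fix x assume x: "x \<in> D \<inter> (\<Union>h \<in> N0 n \<alpha>. Um n \<alpha> m h)"
    then obtain v h where xD: "x \<in> D" and v: "v \<in> cyl (replicate m True)"
      and xv: "x = germ n \<alpha> (([], h, []), v)"
      by (auto simp: Um_def Theta_def)
    obtain v' where v': "v' \<in> cyl (\<mu> @ \<eta>)" and xv': "x = germ n \<alpha> ((\<gamma>, g, \<mu>), v')"
      using xD unfolding assms(6) Theta_def by auto
    have "((\<gamma>, g, \<mu>), v') \<in> x" using germ_self[OF gG] v' cyl_app xv' by blast
    then have "v = v'" using xv unfolding germ_def germ_rel_def by auto
    then have "x = germ n \<alpha> (([], gD, []), v)" using xv' keyeq v by simp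
    then show "x \<in> Um n \<alpha> m gD" using v unfolding Um_def Theta_def by blast
  next
    fix x assume "x \<in> Um n \<alpha> m gD"
    then obtain v where v: "v \<in> cyl (replicate m True)" and xv: "x = germ n \<alpha> (([], gD, []), v)"
      unfolding Um_def Theta_def by blast
    have "x = germ n \<alpha> ((\<gamma>, g, \<mu>), v)" using keyeq v xv by simp
    then have "x \<in> D" using assms(6) sub v unfolding Theta_def by blast
    moreover have "x \<in> (\<Union>h \<in> N0 n \<alpha>. Um n \<alpha> m h)" using gDN v xv unfolding Um_def Theta_def by blast
    ultimately show "x \<in> D \<inter> (\<Union>h \<in> N0 n \<alpha>. Um n \<alpha> m h)" by blast
  qed
qed

end
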